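(* Let $q_1,q_2,q_3,q_4$ satisfy $q_1q_2q_3q_4=1$, let $x$ be a further variable, and let $\rho$ be a finite solid partition. For $k\ge1$ let $\Pi^{(k)}=\{(i,j,l):(i,j,l,k)\in\rho\}$ and $$\boldsymbol{\Pi}^{(k)}=\sum_{(i,j,l)\in\Pi^{(k)}}x\,q_4^{k-1}q_1^{i-1}q_2^{j-1}q_3^{l-1}.$$ Define $$s(\Pi)=\Big[\sum_{i<j}\mathbf P_{123}\,\boldsymbol{\Pi}^{(i)\vee}\boldsymbol{\Pi}^{(j)}\Big]^{(0)}.$$ Then $s(\Pi)\equiv\sigma_4(\rho)\pmod 2$, where $\sigma_4(\rho)=\#\{(i,i,i,j)\in\rho:\ i<j\}$; in particular $(-1)^{s(\Pi)}=(-1)^{\sigma_4(\rho)}$.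
   Context: A finite solid partition is a finite set $\rho\subset\mathbb Z_{\ge1}^4$ such that if $(i_1,\dots,i_4)\in\rho$ and $1\le i'_a\le i_a$ for all $a$ then $(i'_1,\dots,i'_4)\in\rho$. Characters are finite $\mathbb Z$-combinations of Laurent monomials; $\mathbf X^\vee$ replaces each monomial $m$ by $m^{-1}$. $\mathbf P_{123}=(1-q_1)(1-q_2)(1-q_3)$. For a character $\mathbf X$, after substituting $q_4=(q_1q_2q_3)^{-1}$ (the variable $x$ cancels in $\boldsymbol\Pi^{(i)\vee}\boldsymbol\Pi^{(j)}$), $[\mathbf X]^{(0)}\in\mathbb Z$ denotes its unmovable part, i.e. the coefficient of the constant monomial $1$ in the resulting Laurent polynomial in $q_1,q_2,q_3$. *)

theory Defs
  imports Main "HOL-Library.Product_Plus"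
begin

type_synonym pt4 = "nat \<times> nat \<times> nat \<times> nat"

definition solid_partition :: "pt4 set \<Rightarrow> bool" where
  "solid_partition \<rho> \<longleftrightarrow> finite \<rho> \<and>
     (\<forall>(a,b,c,d)\<in>\<rho>. 1 \<le> a \<and> 1 \<le> b \<and> 1 \<le> c \<and> 1 \<le> d) \<and>
     (\<forall>(a,b,c,d)\<in>\<rho>. \<forall>a' b' c' d'. 1 \<le> a' \<and> a' \<le> a \<and> 1 \<le> b' \<and> b' \<le> b \<and>
          1 \<le> c' \<and> c' \<le> c \<and> 1 \<le> d' \<and> d' \<le> d \<longrightarrow> (a',b',c',d') \<in> \<rho>)"

text \<open>Laurent monomials x^a q1^b q2^c q3^d q4^e are exponent vectors (a,b,c,d,e);
  a character is a finitely supported integer function on monomials.\<close>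
type_synonym mon = "int \<times> int \<times> int \<times> int \<times> int"
type_synonym chr = "mon \<Rightarrow> int"

definition supp :: "chr \<Rightarrow> mon set" where
  "supp X = {m. X m \<noteq> 0}"

definition cmon :: "mon \<Rightarrow> chr" where
  "cmon m = (\<lambda>m'. if m' = m then 1 else 0)"

definition cmul :: "chr \<Rightarrow> chr \<Rightarrow> chr" where
  "cmul X Y = (\<lambda>m. \<Sum>a\<in>supp X. X a * Y (m - a))"

definition cdual :: "chr \<Rightarrow> chr" where
  "cdual X = (\<lambda>m. X (- m))"

definition csum :: "'a set \<Rightarrow> ('a \<Rightarrow> chr) \<Rightarrow> chr" where
  "csum A f = (\<lambda>m. \<Sum>a\<in>A. f a m)"

definition one_minus :: "mon \<Rightarrow> chr" where
  "one_minus m = (\<lambda>m'. cmon 0 m' - cmon m m')"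

definition P123 :: chr where
  "P123 = cmul (cmul (one_minus (0,1,0,0,0)) (one_minus (0,0,1,0,0))) (one_minus (0,0,0,1,0))"

text \<open>Substitution q4 = (q1 q2 q3)^{-1}: x^a q1^b q2^c q3^d q4^e becomes
  x^a q1^(b-e) q2^(c-e) q3^(d-e) (encoded with q4-exponent 0).\<close>
definition subst_mon :: "mon \<Rightarrow> mon" where
  "subst_mon m = (case m of (a,b,c,d,e) \<Rightarrow> (a, b - e, c - e, d - e, 0))"

definition subst_q4 :: "chr \<Rightarrow> chr" where
  "subst_q4 X = (\<lambda>m'. \<Sum>m\<in>{m\<in>supp X. subst_mon m = m'}. X m)"

definition unmovable :: "chr \<Rightarrow> int" where
  "unmovable X = subst_q4 X 0"

definition layer :: "pt4 set \<Rightarrow> nat \<Rightarrow> (nat \<times> nat \<times> nat) set" where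
  "layer \<rho> k = {(i,j,l). (i,j,l,k) \<in> \<rho>}"

definition Pi_chr :: "pt4 set \<Rightarrow> nat \<Rightarrow> chr" where
  "Pi_chr \<rho> k = csum (layer \<rho> k)
     (\<lambda>(i,j,l). cmon (1, int i - 1, int j - 1, int l - 1, int k - 1))"

text \<open>Layers are empty beyond the largest fourth coordinate, so the sum over
  1 \<le> i < j may be restricted to j \<le> that maximum.\<close>
definition max_layer :: "pt4 set \<Rightarrow> nat" where
  "max_layer \<rho> = Max (insert 0 ((\<lambda>(a,b,c,d). d) ` \<rho>))"

definition s_Pi :: "pt4 set \<Rightarrow> int" where
  "s_Pi \<rho> = unmovable
     (csum {(i,j). 1 \<le> i \<and> i < j \<and> j \<le> max_layer \<rho>}
        (\<lambda>(i,j). cmul P123 (cmul (cdual (Pi_chr \<rho> i)) (Pi_chr \<rho> j))))"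

definition sigma4 :: "pt4 set \<Rightarrow> nat" where
  "sigma4 \<rho> = card {p\<in>\<rho>. \<exists>i j. p = (i,i,i,j) \<and> i < j}"

end

theory Submission
  imports Defs "HOL-Library.Product_Plus"
begin


definition lin :: "'k set \<Rightarrow> ('k \<Rightarrow> int) \<Rightarrow> ('k \<Rightarrow> mon) \<Rightarrow> chr" where
  "lin K c g = (\<lambda>m. \<Sum>k\<in>K. c k * cmon (g k) m)"

lemma supp_lin: "finite K \<Longrightarrow> supp (lin K c g) \<subseteq> g ` K"
proof
  fix m assume "m \<in> supp (lin K c g)"
  then have "(\<Sum>k\<in>K. c k * cmon (g k) m) \<noteq> 0" unfolding supp_def lin_def by simp
  then obtain k where "k \<in> K" "c k * cmon (g k) m \<noteq> 0" by (meson sum.neutral)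
  then show "m \<in> g ` K" by (auto simp: cmon_def split: if_splits)
qed

lemma cmul_lin_left:
  assumes "finite K"
  shows "cmul (lin K c g) Y = (\<lambda>m. \<Sum>k\<in>K. c k * Y (m - g k))"
proof
  fix m
  let ?X = "lin K c g"
  have "cmul ?X Y m = (\<Sum>a\<in>g ` K. ?X a * Y (m - a))"
    unfolding cmul_def
    apply (rule sum.mono_neutral_left)
    using assms supp_lin[OF assms, of c] by (auto simp: supp_def)
  also have "\<dots> = (\<Sum>a\<in>g ` K. \<Sum>k\<in>K. c k * cmon (g k) a * Y (m - a))"
    unfolding lin_def by (simp add: sum_distrib_right)
  also have "\<dots> = (\<Sum>k\<in>K. \<Sum>a\<in>g ` K. c k * cmon (g k) a * Y (m - a))"
    by (rule sum.swap)
  also have "\<dots> = (\<Sum>k\<in>K. c k * Y (m - g k))"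
  proof (rule sum.cong[OF refl])
    fix k assume k: "k \<in> K"
    have "(\<Sum>a\<in>g ` K. c k * cmon (g k) a * Y (m - a)) = (\<Sum>a\<in>g ` K. if a = g k then c k * Y (m - a) else 0)"
      by (rule sum.cong) (auto simp: cmon_def)
    also have "\<dots> = c k * Y (m - g k)" using k assms by (simp add: sum.delta')
    finally show "(\<Sum>a\<in>g ` K. c k * cmon (g k) a * Y (m - a)) = c k * Y (m - g k)" .
  qed
  finally show "cmul ?X Y m = (\<Sum>k\<in>K. c k * Y (m - g k))" .
qed

lemma cmul_lin:
  assumes "finite K" "finite L"
  shows "cmul (lin K c g) (lin L d h) = lin (K \<times> L) (\<lambda>(k,l). c k * d l) (\<lambda>(k,l). g k + h l)"
proof
  fix m
  have "cmul (lin K c g) (lin L d h) m = (\<Sum>k\<in>K. \<Sum>l\<in>L. c k * d l * cmon (g k + h l) m)"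
    unfolding cmul_lin_left[OF assms(1)] apply (simp only: lin_def)
    by (auto simp: sum_distrib_left cmon_def algebra_simps intro!: sum.cong)
  also have "\<dots> = lin (K \<times> L) (\<lambda>(k,l). c k * d l) (\<lambda>(k,l). g k + h l) m"
    unfolding lin_def sum.cartesian_product by (simp add: split_def)
  finally show "cmul (lin K c g) (lin L d h) m = lin (K \<times> L) (\<lambda>(k,l). c k * d l) (\<lambda>(k,l). g k + h l) m" .
qed

lemma cdual_lin: "cdual (lin K c g) = lin K c (\<lambda>k. - g k)"
  unfolding cdual_def lin_def cmon_def
proof (rule ext, rule sum.cong)
  fix m k
  have "(- m = g k) = (m = - g k)" by (metis minus_minus)
  then show "c k * (if - m = g k then 1 else 0) = c k * (if m = - g k then 1 else 0)" by simp
qed simp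

lemma csum_lin:
  assumes "finite A" "\<And>a. a \<in> A \<Longrightarrow> finite (K a)" "\<And>a. a \<in> A \<Longrightarrow> f a = lin (K a) (c a) (g a)"
  shows "csum A f = lin (Sigma A K) (\<lambda>(a,k). c a k) (\<lambda>(a,k). g a k)"
proof
  fix m
  have "csum A f m = (\<Sum>a\<in>A. \<Sum>k\<in>K a. c a k * cmon (g a k) m)"
    unfolding csum_def using assms(3) by (simp add: lin_def)
  also have "\<dots> = (\<Sum>(a,k)\<in>Sigma A K. c a k * cmon (g a k) m)"
    using assms by (simp add: sum.Sigma)
  finally show "csum A f m = lin (Sigma A K) (\<lambda>(a,k). c a k) (\<lambda>(a,k). g a k) m"
    by (simp add: lin_def split_def)
qed

lemma cmon_lin: "cmon m = lin (UNIV::unit set) (\<lambda>_. 1) (\<lambda>_. m)"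
  unfolding lin_def by simp

lemma one_minus_lin: "one_minus m = lin (UNIV::bool set) (\<lambda>b. if b then -1 else 1) (\<lambda>b. if b then m else 0)"
  unfolding one_minus_def lin_def by (auto simp: UNIV_bool)

lemma unmovable_lin:
  assumes "finite K"
  shows "unmovable (lin K c g) = (\<Sum>k\<in>K. if subst_mon (g k) = 0 then c k else 0)"
proof -
  let ?X = "lin K c g"
  have "unmovable ?X = (\<Sum>m\<in>{m\<in>g ` K. subst_mon m = 0}. ?X m)"
    unfolding unmovable_def subst_q4_def
    apply (rule sum.mono_neutral_left)
    using assms supp_lin[OF assms, of c] by (auto simp: supp_def)
  also have "\<dots> = (\<Sum>m\<in>{m\<in>g ` K. subst_mon m = 0}. \<Sum>k\<in>K. c k * cmon (g k) m)"
    unfolding lin_def ..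
  also have "\<dots> = (\<Sum>k\<in>K. \<Sum>m\<in>{m\<in>g ` K. subst_mon m = 0}. c k * cmon (g k) m)"
    by (rule sum.swap)
  also have "\<dots> = (\<Sum>k\<in>K. if subst_mon (g k) = 0 then c k else 0)"
  proof (rule sum.cong[OF refl])
    fix k assume k: "k \<in> K"
    have "(\<Sum>m\<in>{m\<in>g ` K. subst_mon m = 0}. c k * cmon (g k) m) = (\<Sum>m\<in>{m\<in>g ` K. subst_mon m = 0}. if m = g k then c k else 0)"
      by (rule sum.cong) (auto simp: cmon_def)
    also have "\<dots> = (if subst_mon (g k) = 0 then c k else 0)" using k assms by (simp add: sum.delta')
    finally show "(\<Sum>m\<in>{m\<in>g ` K. subst_mon m = 0}. c k * cmon (g k) m) = (if subst_mon (g k) = 0 then c k else 0)" .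
  qed
  finally show ?thesis .
qed


lemma par8:
  fixes a b c e :: nat
  shows "((min e (min a (min b c))) + (min e (min (a+1) (min b c)))
   + (min e (min a (min (b+1) c))) + (min e (min (a+1) (min (b+1) c)))
   + (min e (min a (min b (c+1)))) + (min e (min (a+1) (min b (c+1))))
   + (min e (min a (min (b+1) (c+1)))) + (min e (min (a+1) (min (b+1) (c+1))))) mod 2
   = (if a = b \<and> b = c \<and> a < e then 1 else 0)"
proof -
  consider "a < b" "a < c" | "b < a" "b < c" | "c < a" "c < b" | "a = b" "a < c" | "a = c" "a < b" | "b = c" "b < a" | "a = b" "b = c"
    by linarith
  then show ?thesis
  proof cases
    case 1 
    then have F: "min a (min b c) = a" "min a (min (b+1) c) = a" "min a (min b (c+1)) = a" "min a (min (b+1) (c+1)) = a"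
       "min (a+1) (min b c) = a+1" "min (a+1) (min (b+1) c) = a+1" "min (a+1) (min b (c+1)) = a+1" "min (a+1) (min (b+1) (c+1)) = a+1"
      by (simp_all add: min_def)
    then show ?thesis using 1 unfolding F by (cases "e \<le> a"; cases "e \<le> a+1"; simp add: min_def; presburger?)
  next
    case 2 
    then have F: "min a (min b c) = b" "min a (min (b+1) c) = b+1" "min a (min b (c+1)) = b" "min (a+1) (min b (c+1)) = b"
       "min (a+1) (min b c) = b" "min (a+1) (min (b+1) c) = b+1" "min a (min (b+1) (c+1)) = b+1" "min (a+1) (min (b+1) (c+1)) = b+1"
      by (simp_all add: min_def)
    then show ?thesis using 2 unfolding F by (cases "e \<le> b"; cases "e \<le> b+1"; simp add: min_def; presburger?)
  next
    case 3
    then have F: "min a (min b c) = c" "min a (min (b+1) c) = c" "min (a+1) (min b c) = c" "min (a+1) (min (b+1) c) = c"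
       "min a (min b (c+1)) = c+1" "min (a+1) (min b (c+1)) = c+1" "min a (min (b+1) (c+1)) = c+1" "min (a+1) (min (b+1) (c+1)) = c+1"
      by (simp_all add: min_def)
    then show ?thesis using 3 unfolding F by (cases "e \<le> c"; cases "e \<le> c+1"; simp add: min_def; presburger?)
  next
    case 4
    then have F: "min a (min b c) = a" "min a (min (b+1) c) = a" "min (a+1) (min b c) = a" "min (a+1) (min (b+1) c) = a+1"
       "min a (min b (c+1)) = a" "min (a+1) (min b (c+1)) = a" "min a (min (b+1) (c+1)) = a" "min (a+1) (min (b+1) (c+1)) = a+1"
      by (simp_all add: min_def)
    then show ?thesis using 4 unfolding F by (cases "e \<le> a"; cases "e \<le> a+1"; simp add: min_def; presburger?)
  next
    case 5
    then have F: "min a (min b c) = a" "min a (min (b+1) c) = a" "min (a+1) (min b c) = a" "min (a+1) (min (b+1) c) = a"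
       "min a (min b (c+1)) = a" "min (a+1) (min b (c+1)) = a+1" "min a (min (b+1) (c+1)) = a" "min (a+1) (min (b+1) (c+1)) = a+1"
      by (simp_all add: min_def)
    then show ?thesis using 5 unfolding F by (cases "e \<le> a"; cases "e \<le> a+1"; simp add: min_def; presburger?)
  next
    case 6
    then have F: "min a (min b c) = b" "min a (min (b+1) c) = b" "min (a+1) (min b c) = b" "min (a+1) (min (b+1) c) = b"
       "min a (min b (c+1)) = b" "min (a+1) (min b (c+1)) = b" "min a (min (b+1) (c+1)) = b+1" "min (a+1) (min (b+1) (c+1)) = b+1"
      by (simp_all add: min_def)
    then show ?thesis using 6 unfolding F by (cases "e \<le> b"; cases "e \<le> b+1"; simp add: min_def; presburger?)
  next
    case 7
    then have F: "min a (min b c) = a" "min a (min (b+1) c) = a" "min (a+1) (min b c) = a" "min (a+1) (min (b+1) c) = a"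
       "min a (min b (c+1)) = a" "min (a+1) (min b (c+1)) = a" "min a (min (b+1) (c+1)) = a" "min (a+1) (min (b+1) (c+1)) = a+1"
      by (simp_all add: min_def)
    then show ?thesis using 7 unfolding F by (cases "e \<le> a"; cases "e \<le> a+1"; simp add: min_def; presburger?)
  qed
qed


lemma lin_cong: "(\<And>k. k \<in> K \<Longrightarrow> c k = c' k) \<Longrightarrow> (\<And>k. k \<in> K \<Longrightarrow> g k = g' k) \<Longrightarrow> lin K c g = lin K c' g'"
  unfolding lin_def by (auto intro!: sum.cong)

lemma finite_layer: "finite \<rho> \<Longrightarrow> finite (layer \<rho> k)"
proof -
  assume "finite \<rho>"
  moreover have "layer \<rho> k \<subseteq> (\<lambda>(i,j,l,k). (i,j,l)) ` \<rho>" unfolding layer_def by force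
  ultimately show ?thesis by (meson finite_surj)
qed

definition pimon :: "nat \<times> nat \<times> nat \<Rightarrow> nat \<Rightarrow> mon" where
  "pimon a k = (case a of (i,j,l) \<Rightarrow> (1, int i - 1, int j - 1, int l - 1, int k - 1))"

lemma Pi_lin: "Pi_chr \<rho> k = lin (layer \<rho> k) (\<lambda>_. 1) (\<lambda>a. pimon a k)"
  unfolding Pi_chr_def csum_def lin_def pimon_def
  by (rule ext, rule sum.cong) (auto simp: split_def)

definition cP :: "(bool \<times> bool) \<times> bool \<Rightarrow> int" where
  "cP S = (case S of ((s1,s2),s3) \<Rightarrow> (if s1 then -1 else 1) * (if s2 then -1 else 1) * (if s3 then -1 else 1))"
definition eP :: "(bool \<times> bool) \<times> bool \<Rightarrow> mon" where
  "eP S = (case S of ((s1,s2),s3) \<Rightarrow> (0, of_bool s1, of_bool s2, of_bool s3, 0))"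

lemma P123_lin: "P123 = lin UNIV cP eP"
  unfolding P123_def one_minus_lin
  apply (subst cmul_lin, simp, simp)
  apply (subst cmul_lin, simp, simp)
  apply (simp only: UNIV_Times_UNIV)
  apply (rule lin_cong)
  by (auto simp: cP_def eP_def zero_prod_def)

lemma term_lin:
  assumes "finite \<rho>"
  shows "cmul P123 (cmul (cdual (Pi_chr \<rho> i)) (Pi_chr \<rho> j)) =
    lin (UNIV \<times> (layer \<rho> i \<times> layer \<rho> j)) (\<lambda>(S,_). cP S) (\<lambda>(S,(a,b)). eP S + (- pimon a i + pimon b j))"
  unfolding Pi_lin cdual_lin P123_lin
  apply (subst cmul_lin, simp add: finite_layer assms, simp add: finite_layer assms)
  apply (subst cmul_lin, simp, simp add: finite_layer assms)
  apply (rule lin_cong)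
  by auto

definition Iset :: "pt4 set \<Rightarrow> (nat \<times> nat) set" where
  "Iset \<rho> = {(i,j). 1 \<le> i \<and> i < j \<and> j \<le> max_layer \<rho>}"

lemma finite_Iset: "finite (Iset \<rho>)"
  by (rule finite_subset[of _ "{..max_layer \<rho>} \<times> {..max_layer \<rho>}"]) (auto simp: Iset_def)

definition Tset :: "pt4 set \<Rightarrow> ((nat \<times> nat) \<times> ((bool \<times> bool) \<times> bool) \<times> (nat \<times> nat \<times> nat) \<times> (nat \<times> nat \<times> nat)) set" where
  "Tset \<rho> = Sigma (Iset \<rho>) (\<lambda>(i,j). UNIV \<times> (layer \<rho> i \<times> layer \<rho> j))"

definition Gx where "Gx x = (case x of ((i,j),(S,(a,b))) \<Rightarrow> eP S + (- pimon a i + pimon b j))"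
definition Cx where "Cx x = (case x of ((i,j),(S,_)) \<Rightarrow> cP S)"

lemma s_lin:
  assumes "finite \<rho>"
  shows "s_Pi \<rho> = unmovable (lin (Tset \<rho>) Cx Gx)"
proof -
  have "csum (Iset \<rho>) (\<lambda>(i,j). cmul P123 (cmul (cdual (Pi_chr \<rho> i)) (Pi_chr \<rho> j)))
     = lin (Sigma (Iset \<rho>) (\<lambda>(i,j). UNIV \<times> (layer \<rho> i \<times> layer \<rho> j)))
          (\<lambda>(ij,k). (\<lambda>(S,_). cP S) k) (\<lambda>(ij,k). (case ij of (i,j) \<Rightarrow> (\<lambda>(S,(a,b)). eP S + (- pimon a i + pimon b j))) k)"
    apply (rule csum_lin[OF finite_Iset])
    using assms by (auto simp: finite_layer term_lin)
  also have "\<dots> = lin (Tset \<rho>) Cx Gx"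
    unfolding Tset_def by (rule lin_cong) (auto simp: Cx_def Gx_def)
  finally show ?thesis unfolding s_Pi_def Iset_def by simp
qed

lemma finite_Tset: "finite \<rho> \<Longrightarrow> finite (Tset \<rho>)"
  unfolding Tset_def by (auto intro!: finite_SigmaI finite_Iset simp: finite_layer)

lemma s_card:
  assumes "finite \<rho>"
  shows "s_Pi \<rho> mod 2 = int (card {x \<in> Tset \<rho>. subst_mon (Gx x) = 0}) mod 2"
proof -
  have "s_Pi \<rho> = (\<Sum>x\<in>Tset \<rho>. if subst_mon (Gx x) = 0 then Cx x else 0)"
    using s_lin[OF assms] unmovable_lin[OF finite_Tset[OF assms]] by simp
  then have "s_Pi \<rho> mod 2 = (\<Sum>x\<in>Tset \<rho>. (if subst_mon (Gx x) = 0 then Cx x else 0) mod 2) mod 2"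
    by (simp add: mod_sum_eq)
  also have "\<dots> = (\<Sum>x\<in>Tset \<rho>. if subst_mon (Gx x) = 0 then 1 else 0) mod 2"
    by (rule arg_cong[where f="\<lambda>t. t mod 2"], rule sum.cong) (auto simp: Cx_def cP_def split: prod.splits)
  also have "\<dots> = int (card {x \<in> Tset \<rho>. subst_mon (Gx x) = 0}) mod 2"
    using finite_Tset[OF assms] by (simp add: sum.If_cases Int_def)
  finally show ?thesis .
qed

lemma Z_iff: "subst_mon (Gx ((i,j),(((s1,s2),s3),((a1,a2,a3),(b1,b2,b3))))) = 0 \<longleftrightarrow>
   (int a1 = int b1 + of_bool s1 - (int j - int i) \<and> int a2 = int b2 + of_bool s2 - (int j - int i)
    \<and> int a3 = int b3 + of_bool s3 - (int j - int i))"
  by (cases s1; cases s2; cases s3; simp add: Gx_def eP_def pimon_def subst_mon_def zero_prod_def; arith)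

definition Dset :: "pt4 \<Rightarrow> (bool \<times> bool) \<times> bool \<Rightarrow> nat set" where
  "Dset p S = (case p of (a,b,c,e) \<Rightarrow> case S of ((s1,s2),s3) \<Rightarrow>
     {d. 1 \<le> d \<and> d < e \<and> d < a + of_bool s1 \<and> d < b + of_bool s2 \<and> d < c + of_bool s3})"

definition Bset :: "pt4 set \<Rightarrow> _" where
  "Bset \<rho> = Sigma \<rho> (\<lambda>p. Sigma UNIV (\<lambda>S. Dset p S))"

definition fmap :: "(nat \<times> nat) \<times> ((bool \<times> bool) \<times> bool) \<times> (nat \<times> nat \<times> nat) \<times> (nat \<times> nat \<times> nat) \<Rightarrow> pt4 \<times> ((bool \<times> bool) \<times> bool) \<times> nat" where
  "fmap x = (case x of ((i,j),(S,(a,(b1,b2,b3)))) \<Rightarrow> ((b1,b2,b3,j),(S, j - i)))"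

lemma max_layer_ge: "finite \<rho> \<Longrightarrow> (a,b,c,e) \<in> \<rho> \<Longrightarrow> e \<le> max_layer \<rho>"
  unfolding max_layer_def by (rule Max_ge) force+

lemma fmap_inj:
  "inj_on fmap {x \<in> Tset \<rho>. subst_mon (Gx x) = 0}"
proof (rule inj_onI)
  fix x y
  assume x: "x \<in> {x \<in> Tset \<rho>. subst_mon (Gx x) = 0}" and y: "y \<in> {x \<in> Tset \<rho>. subst_mon (Gx x) = 0}"
    and e: "fmap x = fmap y"
  obtain i j s1 s2 s3 a1 a2 a3 b1 b2 b3 where xd: "x = ((i,j),(((s1,s2),s3),((a1,a2,a3),(b1,b2,b3))))"
    by (metis prod.exhaust)
  obtain i' j' s1' s2' s3' a1' a2' a3' b1' b2' b3' where yd: "y = ((i',j'),(((s1',s2'),s3'),((a1',a2',a3'),(b1',b2',b3'))))"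
    by (metis prod.exhaust)
  from x y e show "x = y"
    unfolding xd yd by (simp add: Z_iff fmap_def Tset_def Iset_def) linarith
qed

lemma fmap_image:
  assumes "solid_partition \<rho>"
  shows "fmap ` {x \<in> Tset \<rho>. subst_mon (Gx x) = 0} = Bset \<rho>"
proof
  have fin: "finite \<rho>" and pos: "\<And>a b c d. (a,b,c,d) \<in> \<rho> \<Longrightarrow> 1 \<le> a \<and> 1 \<le> b \<and> 1 \<le> c \<and> 1 \<le> d"
    and dc: "\<And>a b c d a' b' c' d'. (a,b,c,d) \<in> \<rho> \<Longrightarrow> 1 \<le> a' \<Longrightarrow> a' \<le> a \<Longrightarrow> 1 \<le> b' \<Longrightarrow> b' \<le> b \<Longrightarrow>
          1 \<le> c' \<Longrightarrow> c' \<le> c \<Longrightarrow> 1 \<le> d' \<Longrightarrow> d' \<le> d \<Longrightarrow> (a',b',c',d') \<in> \<rho>"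
    using assms unfolding solid_partition_def by (blast, fast, blast)
  show "fmap ` {x \<in> Tset \<rho>. subst_mon (Gx x) = 0} \<subseteq> Bset \<rho>"
  proof
    fix y assume "y \<in> fmap ` {x \<in> Tset \<rho>. subst_mon (Gx x) = 0}"
    then obtain x where x: "x \<in> Tset \<rho>" "subst_mon (Gx x) = 0" and y: "y = fmap x" by auto
    obtain i j s1 s2 s3 a1 a2 a3 b1 b2 b3 where xd: "x = ((i,j),(((s1,s2),s3),((a1,a2,a3),(b1,b2,b3))))"
      by (metis prod.exhaust)
    have A: "(a1,a2,a3,i) \<in> \<rho>" "(b1,b2,b3,j) \<in> \<rho>" "1 \<le> i" "i < j"
      using x(1) unfolding xd Tset_def Iset_def layer_def by auto
    have Z: "int a1 = int b1 + of_bool s1 - (int j - int i)" "int a2 = int b2 + of_bool s2 - (int j - int i)"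
      "int a3 = int b3 + of_bool s3 - (int j - int i)"
      using x(2) unfolding xd Z_iff by auto
    have "1 \<le> a1" "1 \<le> a2" "1 \<le> a3" using pos[OF A(1)] by auto
    then show "y \<in> Bset \<rho>"
      unfolding y xd Bset_def fmap_def Dset_def using A Z by auto
  qed
  show "Bset \<rho> \<subseteq> fmap ` {x \<in> Tset \<rho>. subst_mon (Gx x) = 0}"
  proof
    fix y assume "y \<in> Bset \<rho>"
    then obtain b1 b2 b3 e s1 s2 s3 d where yd: "y = ((b1,b2,b3,e),(((s1,s2),s3),d))"
      and p: "(b1,b2,b3,e) \<in> \<rho>" and D: "1 \<le> d" "d < e" "d < b1 + of_bool s1" "d < b2 + of_bool s2" "d < b3 + of_bool s3"
      unfolding Bset_def Dset_def by (auto split: prod.splits)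
    define x where "x = ((e-d,e),(((s1,s2),s3),((b1+of_bool s1-d, b2+of_bool s2-d, b3+of_bool s3-d),(b1,b2,b3))))"
    have pb: "1 \<le> b1" "1 \<le> b2" "1 \<le> b3" "1 \<le> e" using pos[OF p] by auto
    have a: "(b1+of_bool s1-d, b2+of_bool s2-d, b3+of_bool s3-d, e-d) \<in> \<rho>"
      by (rule dc[OF p]) (use D pb in auto)
    have "e \<le> max_layer \<rho>" using max_layer_ge[OF fin p] .
    then have "x \<in> Tset \<rho>" unfolding x_def Tset_def Iset_def layer_def using a p D by auto
    moreover have "subst_mon (Gx x) = 0" unfolding x_def Z_iff using D by auto
    moreover have "y = fmap x" unfolding x_def yd fmap_def using D by auto
    ultimately show "y \<in> fmap ` {x \<in> Tset \<rho>. subst_mon (Gx x) = 0}" by blast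
  qed
qed



lemma sum_UNIV8:
  fixes f :: "(bool \<times> bool) \<times> bool \<Rightarrow> 'a::comm_monoid_add"
  shows "(\<Sum>S\<in>UNIV. f S) = f ((False,False),False) + f ((True,False),False) + f ((False,True),False)
    + f ((True,True),False) + f ((False,False),True) + f ((True,False),True) + f ((False,True),True) + f ((True,True),True)"
proof -
  have U: "(UNIV::((bool \<times> bool) \<times> bool) set) = {((False,False),False), ((True,False),False), ((False,True),False),
    ((True,True),False), ((False,False),True), ((True,False),True), ((False,True),True), ((True,True),True)}"
    by auto
  show ?thesis unfolding U by (simp add: add.assoc)
qed

lemma card_Dset:
  assumes "1 \<le> a" "1 \<le> b" "1 \<le> c" "1 \<le> e"
  shows "card (Dset (a,b,c,e) ((s1,s2),s3)) = min (e-1) (min (a-1 + of_bool s1) (min (b-1 + of_bool s2) (c-1 + of_bool s3)))"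
proof -
  have e1: "a + of_bool s1 - 1 = a - 1 + of_bool s1" "b + of_bool s2 - 1 = b - 1 + of_bool s2"
     "c + of_bool s3 - 1 = c - 1 + of_bool s3" using assms by auto
  have "Dset (a,b,c,e) ((s1,s2),s3) = {1..<min e (min (a + of_bool s1) (min (b + of_bool s2) (c + of_bool s3)))}"
    unfolding Dset_def by auto
  then have "card (Dset (a,b,c,e) ((s1,s2),s3)) = min e (min (a + of_bool s1) (min (b + of_bool s2) (c + of_bool s3))) - 1"
    by (simp only: card_atLeastLessThan)
  also have "\<dots> = min (e-1) (min (a + of_bool s1 - 1) (min (b + of_bool s2 - 1) (c + of_bool s3 - 1)))"
    by (simp only: min_diff)
  also have "\<dots> = min (e-1) (min (a-1 + of_bool s1) (min (b-1 + of_bool s2) (c-1 + of_bool s3)))"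
    by (simp only: e1)
  finally show ?thesis .
qed

lemma finite_Dset: "finite (Dset p S)"
proof -
  obtain a b c e where p: "p = (a,b,c,e)" by (metis prod.exhaust)
  obtain s1 s2 s3 where S: "S = ((s1,s2),s3)" by (metis prod.exhaust)
  have "Dset p S \<subseteq> {..<e}" unfolding p S Dset_def by auto
  then show ?thesis by (rule finite_subset) simp
qed

lemma hp:
  assumes "1 \<le> a" "1 \<le> b" "1 \<le> c" "1 \<le> e"
  shows "(\<Sum>S\<in>UNIV. card (Dset (a,b,c,e) S)) mod 2 = (if \<exists>i j. (a,b,c,e) = (i,i,i,j) \<and> i < j then 1 else 0)"
proof -
  have "(\<Sum>S\<in>UNIV. card (Dset (a,b,c,e) S)) mod 2 = (if a-1 = b-1 \<and> b-1 = c-1 \<and> a-1 < e-1 then 1 else 0)"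
    unfolding sum_UNIV8 card_Dset[OF assms] of_bool_eq add_0_right by (rule par8)
  also have "\<dots> = (if \<exists>i j. (a,b,c,e) = (i,i,i,j) \<and> i < j then 1 else 0)"
  proof -
    have "(a-1 = b-1 \<and> b-1 = c-1 \<and> a-1 < e-1) \<longleftrightarrow> (\<exists>i j. (a,b,c,e) = (i,i,i,j) \<and> i < j)"
    proof
      assume h: "a-1 = b-1 \<and> b-1 = c-1 \<and> a-1 < e-1"
      then have "(a,b,c,e) = (a,a,a,e) \<and> a < e" using assms by (simp; linarith)
      then show "\<exists>i j. (a,b,c,e) = (i,i,i,j) \<and> i < j" by blast
    next
      assume "\<exists>i j. (a,b,c,e) = (i,i,i,j) \<and> i < j"
      then obtain i j where "(a,b,c,e) = (i,i,i,j)" "i < j" by blast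
      then show "a-1 = b-1 \<and> b-1 = c-1 \<and> a-1 < e-1" using assms by simp
    qed
    then show ?thesis by (simp only:)
  qed
  finally show ?thesis .
qed

lemma modint: "(a::nat) mod 2 = b mod 2 \<Longrightarrow> int a mod 2 = int b mod 2"
  by (metis of_nat_mod of_nat_numeral)

theorem proposition6p8:
  assumes "solid_partition \<rho>"
  shows "s_Pi \<rho> mod 2 = int (sigma4 \<rho>) mod 2
         \<and> (-1::int) ^ nat \<bar>s_Pi \<rho>\<bar> = (-1) ^ sigma4 \<rho>"
proof -
  have fin: "finite \<rho>" and pos: "\<And>a b c d. (a,b,c,d) \<in> \<rho> \<Longrightarrow> 1 \<le> a \<and> 1 \<le> b \<and> 1 \<le> c \<and> 1 \<le> d"
    using assms unfolding solid_partition_def by (blast, fast)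
  have "card {x \<in> Tset \<rho>. subst_mon (Gx x) = 0} = card (Bset \<rho>)"
    using bij_betw_same_card[OF bij_betw_imageI[OF fmap_inj fmap_image[OF assms]]] .
  also have "\<dots> = (\<Sum>p\<in>\<rho>. \<Sum>S\<in>UNIV. card (Dset p S))"
    unfolding Bset_def using fin by (simp add: card_SigmaI finite_Dset)
  finally have c1: "card {x \<in> Tset \<rho>. subst_mon (Gx x) = 0} mod 2 = (\<Sum>p\<in>\<rho>. (\<Sum>S\<in>UNIV. card (Dset p S)) mod 2) mod 2"
    by (simp add: mod_sum_eq)
  also have "\<dots> = (\<Sum>p\<in>\<rho>. if \<exists>i j. p = (i,i,i,j) \<and> i < j then 1 else 0) mod 2"
  proof (rule arg_cong[where f="\<lambda>t. t mod 2"], rule sum.cong[OF refl])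
    fix p assume "p \<in> \<rho>"
    moreover obtain a b c e where "p = (a,b,c,e)" by (metis prod.exhaust)
    ultimately show "(\<Sum>S\<in>UNIV. card (Dset p S)) mod 2 = (if \<exists>i j. p = (i,i,i,j) \<and> i < j then 1 else 0)"
      using hp[of a b c e] pos[of a b c e] by simp
  qed
  also have "\<dots> = sigma4 \<rho> mod 2"
    unfolding sigma4_def using fin by (simp add: sum.If_cases Int_def)
  finally have c2: "card {x \<in> Tset \<rho>. subst_mon (Gx x) = 0} mod 2 = sigma4 \<rho> mod 2" .
  have m: "s_Pi \<rho> mod 2 = int (sigma4 \<rho>) mod 2"
    unfolding s_card[OF fin] using c2 by (rule modint)
  then have "even (s_Pi \<rho>) \<longleftrightarrow> even (sigma4 \<rho>)"
    by (metis even_iff_mod_2_eq_zero even_of_nat_iff)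
  then have "even (nat \<bar>s_Pi \<rho>\<bar>) \<longleftrightarrow> even (sigma4 \<rho>)"
    by (simp add: even_nat_iff)
  then have "(-1::int) ^ nat \<bar>s_Pi \<rho>\<bar> = (-1) ^ sigma4 \<rho>"
    by (simp add: minus_one_power_iff)
  with m show ?thesis by blast
qed


end
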